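(* Let $l$ and $m$ be positive integers and let $q(x)=x^6-(l+m+3)x^4+(lm+l+m+3)x^2-1$. Suppose $\pm\theta_1,\pm\theta_2,\pm\theta_3$ are the six roots of $q(x)$ in its splitting field over $\mathbb{Q}$. If $q(x)$ is reducible over $\mathbb{Q}$, then $1,\theta_1,\theta_2$ are linearly independent over $\mathbb{Q}$.
   Context: The roots of $q$ are simple, nonzero and real, and come in pairs $\pm\theta_j$; the labeling means the six roots are $\theta_1,-\theta_1,\theta_2,-\theta_2,\theta_3,-\theta_3$. *)

theory Defs
  imports "HOL-Computational_Algebra.Computational_Algebra"
begin

definition q_poly :: "int \<Rightarrow> int \<Rightarrow> rat poly" where
  "q_poly l m = [:-1, 0, of_int (l*m + l + m + 3), 0, - of_int (l + m + 3), 0, 1:]"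

end

theory Submission
  imports Defs
begin
lemma norat:
  fixes l m :: int and r :: rat
  assumes "l > 0" "m > 0"
  shows "r^3 - of_int(l+m+3)*r^2 + of_int(l*m+l+m+3)*r - 1 \<noteq> 0"
proof
  assume H: "r^3 - of_int(l+m+3)*r^2 + of_int(l*m+l+m+3)*r - 1 = 0"
  obtain n d where nd: "quotient_of r = (n, d)" by (cases "quotient_of r")
  have rd: "r = of_int n / of_int d" using nd quotient_of_div by blast
  have dpos: "d > 0" using nd quotient_of_denom_pos by blast
  have cop: "coprime n d" using nd quotient_of_coprime by blast
  define A where "A = l+m+3"
  define B where "B = l*m+l+m+3"
  have d0: "(of_int d::rat) \<noteq> 0" using dpos by simp
  have "of_int d ^ 3 * (r^3 - of_int A*r^2 + of_int B*r - 1) = 0" using H by (simp add: A_def B_def)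
  moreover have "of_int d ^ 3 * (r^3 - of_int A*r^2 + of_int B*r - 1) = (of_int n)^3 - of_int A * (of_int n)^2 * of_int d + of_int B * of_int n * (of_int d)^2 - (of_int d)^3"
    unfolding rd using d0 by (simp add: field_simps power3_eq_cube power2_eq_square)
  ultimately have "(of_int n)^3 - of_int A * (of_int n)^2 * of_int d + of_int B * of_int n * (of_int d)^2 - (of_int d)^3 = (0::rat)"
    by simp
  hence E: "n^3 - A * n^2 * d + B * n * d^2 - d^3 = 0"
    by (metis (mono_tags, opaque_lifting) of_int_0 of_int_diff of_int_eq_iff of_int_mult of_int_power of_int_add)
  have "n^3 = d * (A*n^2 - B*n*d + d^2)" using E by (simp add: algebra_simps power2_eq_square power3_eq_cube)
  hence "d dvd n^3" by simp
  moreover have "coprime d (n^3)" using cop by (simp add: coprime_commute)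
  ultimately have "is_unit d" by (meson coprime_absorb_right coprime_commute)
  hence d1: "d = 1" using dpos by simp
  have "1 = n * (n^2 - A*n + B)" using E d1 by (simp add: algebra_simps power2_eq_square power3_eq_cube)
  hence "n dvd 1" by (metis dvdI)
  hence "n = 1 \<or> n = -1" by auto
  hence "r = 1 \<or> r = -1" using rd d1 by auto
  thus False
  proof
    assume "r = 1"
    with H have "of_int (l*m) = (0::rat)" by (simp add: algebra_simps)
    thus False using assms by simp
  next
    assume "r = -1"
    with H have "of_int (- 2*(l+m+3) - l*m - 2) = (0::rat)" by (simp add: algebra_simps)
    thus False using assms
      by (smt (verit, ccfv_threshold) mult_pos_pos of_int_eq_0_iff)
  qed
qed

lemma ratroot:
  fixes l m :: int and r :: rat
  assumes "l > 0" "m > 0"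
    and "(of_rat r::complex)^3 - of_int(l+m+3)*(of_rat r)^2 + of_int(l*m+l+m+3)*of_rat r - 1 = 0"
  shows False
proof -
  have "(of_rat (r^3 - of_int(l+m+3)*r^2 + of_int(l*m+l+m+3)*r - 1)::complex) = 0"
    using assms(3) by (simp add: of_rat_add of_rat_diff of_rat_mult of_rat_power)
  hence "r^3 - of_int(l+m+3)*r^2 + of_int(l*m+l+m+3)*r - 1 = 0" by simp
  thus False using norat[OF assms(1,2)] by blast
qed

lemma Kquad:
  fixes l m :: int and y :: complex and a2 a1 a0 :: rat
  assumes lm: "l > 0" "m > 0"
    and py: "y^3 - of_int(l+m+3)*y^2 + of_int(l*m+l+m+3)*y - 1 = 0"
    and e: "of_rat a2 * y^2 + of_rat a1 * y + of_rat a0 = 0"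
  shows "a2 = 0 \<and> a1 = 0 \<and> a0 = 0"
proof -
  define A :: rat where "A = of_int (l+m+3)"
  define B :: rat where "B = of_int (l*m+l+m+3)"
  have oA: "(of_rat A::complex) = of_int (l+m+3)" unfolding A_def by (rule of_rat_of_int_eq)
  have oB: "(of_rat B::complex) = of_int (l*m+l+m+3)" unfolding B_def by (rule of_rat_of_int_eq)
  have py': "y^3 - of_rat A*y^2 + of_rat B*y - 1 = 0" using py unfolding oA oB .
  have lin: "c1 = 0 \<and> c0 = 0" if h: "of_rat c1 * y + of_rat c0 = 0" for c1 c0
  proof (cases "c1 = 0")
    case True thus ?thesis using h by simp
  next
    case False
    have "y * of_rat c1 = - of_rat c0" using h by (simp add: algebra_simps add_eq_0_iff2)
    hence "y = of_rat (- c0 / c1)" using False by (simp add: of_rat_divide of_rat_minus field_simps)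
    hence "(of_rat (- c0 / c1)::complex)^3 - of_int(l+m+3)*(of_rat (- c0 / c1))^2 + of_int(l*m+l+m+3)*of_rat (- c0 / c1) - 1 = 0"
      using py by simp
    thus ?thesis using ratroot[OF lm] by blast
  qed
  show ?thesis
  proof (cases "a2 = 0")
    case True thus ?thesis using e lin by simp
  next
    case False
    define b where "b = a1 / a2"
    define c where "c = a0 / a2"
    have "of_rat a2 * y^2 = (of_rat a2 * y^2 + of_rat a1 * y + of_rat a0) - of_rat a1 * y - of_rat a0" by simp
    hence "of_rat a2 * y^2 = - of_rat a1 * y - of_rat a0" using e by simp
    hence y2: "y^2 = - of_rat b * y - of_rat c"
      using False by (simp add: b_def c_def of_rat_divide field_simps)
    have y3: "y^3 = (of_rat b^2 - of_rat c) * y + of_rat b * of_rat c"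
    proof -
      have "y^3 = y * y^2" by (simp add: power3_eq_cube power2_eq_square)
      also have "\<dots> = y * (- of_rat b * y - of_rat c)" by (simp only: y2)
      also have "\<dots> = - of_rat b * y^2 - of_rat c * y" by (simp add: algebra_simps power2_eq_square)
      also have "\<dots> = - of_rat b * (- of_rat b * y - of_rat c) - of_rat c * y" by (simp only: y2)
      also have "\<dots> = (of_rat b^2 - of_rat c) * y + of_rat b * of_rat c" by (simp add: algebra_simps power2_eq_square)
      finally show ?thesis .
    qed
    define D where "D = b^2 - c + A*b + B"
    define E where "E = b*c + A*c - 1"
    have "of_rat D * y + of_rat E = 0"
    proof -
      have r1: "y^3 - of_rat A*y^2 + of_rat B*y - 1 = ((of_rat b^2 - of_rat c) * y + of_rat b * of_rat c) - of_rat A*(- of_rat b * y - of_rat c) + of_rat B*y - 1"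
        by (simp only: y3 y2)
      have oD: "(of_rat D::complex) = of_rat b^2 - of_rat c + of_rat A * of_rat b + of_rat B"
        unfolding D_def by (simp add: of_rat_add of_rat_diff of_rat_mult of_rat_power)
      have oE: "(of_rat E::complex) = of_rat b * of_rat c + of_rat A * of_rat c - 1"
        unfolding E_def by (simp add: of_rat_add of_rat_diff of_rat_mult)
      have "of_rat D * y + of_rat E = y^3 - of_rat A*y^2 + of_rat B*y - 1"
        unfolding r1 oD oE by (simp add: algebra_simps)
      thus ?thesis using py' by simp
    qed
    hence DE: "D = 0 \<and> E = 0" using lin by blast
    have ident: "t^3 - A*t^2 + B*t - 1 = (t^2 + b*t + c)*(t - A - b) + D*t + E" for t :: rat
      unfolding D_def E_def by (simp add: algebra_simps power2_eq_square power3_eq_cube)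
    have "(A+b)^3 - A*(A+b)^2 + B*(A+b) - 1 = 0" using ident[of "A+b"] DE by simp
    hence "(of_rat ((A+b)^3 - A*(A+b)^2 + B*(A+b) - 1)::complex) = 0" by simp
    hence "(of_rat (A+b)::complex)^3 - of_rat A*(of_rat (A+b))^2 + of_rat B*of_rat (A+b) - 1 = 0"
      by (simp only: of_rat_diff of_rat_add of_rat_mult of_rat_power of_rat_1)
    hence "(of_rat (A+b)::complex)^3 - of_int(l+m+3)*(of_rat (A+b))^2 + of_int(l*m+l+m+3)*of_rat (A+b) - 1 = 0"
      unfolding oA oB .
    thus ?thesis using ratroot[OF lm] by blast
  qed
qed

definition qf :: "int \<Rightarrow> int \<Rightarrow> complex \<Rightarrow> complex" where
  "qf l m z = z^6 - of_int(l+m+3)*z^4 + of_int(l*m+l+m+3)*z^2 - 1"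

lemma Kq:
  fixes l m :: int and t :: complex and u v w :: rat
  assumes lm: "l > 0" "m > 0"
    and qt: "qf l m t = 0"
    and e: "of_rat u * t^2 + of_rat v * t + of_rat w = 0"
  shows "u = 0 \<and> v = 0 \<and> w = 0"
proof -
  define y where "y = t^2"
  have py: "y^3 - of_int(l+m+3)*y^2 + of_int(l*m+l+m+3)*y - 1 = 0"
    using qt unfolding qf_def y_def by (simp flip: power_mult)
  show ?thesis
  proof (cases "v = 0")
    case True
    hence "of_rat 0 * y^2 + of_rat u * y + of_rat w = 0" using e by (simp add: y_def)
    thus ?thesis using Kquad[OF lm py] True by blast
  next
    case False
    have "of_rat v * t = - (of_rat u * y + of_rat w)" using e unfolding y_def
      by (simp add: eq_neg_iff_add_eq_0 algebra_simps)
    hence "(of_rat v * t)^2 = (- (of_rat u * y + of_rat w))^2" by (simp only:)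
    hence "(of_rat v * t)^2 = (of_rat u * y + of_rat w)^2" by (simp only: power2_minus)
    hence "(of_rat v)^2 * y = (of_rat u * y + of_rat w)^2" by (simp add: y_def power_mult_distrib)
    hence "of_rat (u^2) * y^2 + of_rat (2*u*w - v^2) * y + of_rat (w^2) = 0"
      by (simp add: of_rat_add of_rat_diff of_rat_mult of_rat_power algebra_simps power2_eq_square)
    hence "u^2 = 0 \<and> 2*u*w - v^2 = 0" using Kquad[OF lm py] by blast
    hence "v^2 = 0" by auto
    thus ?thesis using False by simp
  qed
qed

definition cub :: "rat \<Rightarrow> rat \<Rightarrow> rat \<Rightarrow> rat \<Rightarrow> complex \<Rightarrow> complex" where
  "cub a0 a1 a2 a3 z = of_rat a0 + of_rat a1 * z + of_rat a2 * z^2 + of_rat a3 * z^3"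

lemma Lcomp:
  fixes l m :: int and t :: complex and \<alpha> \<beta> e0 e1 e2 e3 g0 g1 g2 g3 :: rat
  assumes lm: "l > 0" "m > 0" and g3: "g3 \<noteq> 0"
    and qt: "qf l m t = 0" and gt: "cub g0 g1 g2 g3 t = 0"
    and et: "cub e0 e1 e2 e3 (of_rat \<alpha> + of_rat \<beta> * t) = 0"
  shows "\<forall>z. cub e0 e1 e2 e3 (of_rat \<alpha> + of_rat \<beta> * z) = of_rat (e3*\<beta>^3/g3) * cub g0 g1 g2 g3 z"
    and "e2*\<beta>^2 + 3*e3*\<alpha>*\<beta>^2 - (e3*\<beta>^3/g3)*g2 = 0"
proof -
  define k where "k = e3*\<beta>^3/g3"
  have kg: "e3*\<beta>^3 - k*g3 = 0" using g3 by (simp add: k_def)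
  define A2 where "A2 = e2*\<beta>^2 + 3*e3*\<alpha>*\<beta>^2 - k*g2"
  define A1 where "A1 = e1*\<beta> + 2*e2*\<alpha>*\<beta> + 3*e3*\<alpha>^2*\<beta> - k*g1"
  define A0 where "A0 = e0 + e1*\<alpha> + e2*\<alpha>^2 + e3*\<alpha>^3 - k*g0"
  have id0: "cub e0 e1 e2 e3 (of_rat \<alpha> + of_rat \<beta> * z) - of_rat k * cub g0 g1 g2 g3 z
      = of_rat (e3*\<beta>^3 - k*g3) * z^3 + of_rat A2 * z^2 + of_rat A1 * z + of_rat A0" for z
    unfolding cub_def A2_def A1_def A0_def
    by (simp add: of_rat_add of_rat_diff of_rat_mult of_rat_power algebra_simps power2_eq_square power3_eq_cube)
  have id: "cub e0 e1 e2 e3 (of_rat \<alpha> + of_rat \<beta> * z) - of_rat k * cub g0 g1 g2 g3 z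
      = of_rat A2 * z^2 + of_rat A1 * z + of_rat A0" for z
    using id0[of z] kg by simp
  have "of_rat A2 * t^2 + of_rat A1 * t + of_rat A0 = 0" using id[of t] et gt by simp
  hence A: "A2 = 0 \<and> A1 = 0 \<and> A0 = 0" using Kq[OF lm qt] by blast
  show "\<forall>z. cub e0 e1 e2 e3 (of_rat \<alpha> + of_rat \<beta> * z) = of_rat (e3*\<beta>^3/g3) * cub g0 g1 g2 g3 z"
    using id A unfolding k_def by simp
  show "e2*\<beta>^2 + 3*e3*\<alpha>*\<beta>^2 - (e3*\<beta>^3/g3)*g2 = 0" using A unfolding A2_def k_def by simp
qed

lemma b3: "(b::rat)^3 = 1 \<Longrightarrow> b = 1"
  by (metis le_numeral_extra(1) less_numeral_extra(4)
    linorder_neqE_linordered_idom one_less_power power3_eq_cube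
    power_less_one_iff verit_comp_simplify1(3) zero_le_mult_iff
    zero_less_mult_iff zero_less_numeral)

lemma caseA:
  fixes l m :: int and t :: complex and \<alpha> \<beta> g0 g1 g2 g3 :: rat and H :: "complex \<Rightarrow> complex"
  assumes lm: "l > 0" "m > 0" and g3: "g3 \<noteq> 0"
    and fac: "\<forall>z. qf l m z = cub g0 g1 g2 g3 z * H z"
    and qt: "qf l m t = 0" and gt: "cub g0 g1 g2 g3 t = 0"
    and et: "cub g0 g1 g2 g3 (of_rat \<alpha> + of_rat \<beta> * t) = 0"
  shows "\<alpha> = 0 \<and> \<beta> = 1"
proof -
  note L = Lcomp[OF lm g3 qt gt et]
  have idz: "cub g0 g1 g2 g3 (of_rat \<alpha> + of_rat \<beta> * z) = of_rat (\<beta>^3) * cub g0 g1 g2 g3 z" for z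
    using L(1) g3 by simp
  show ?thesis
  proof (cases "\<beta> = 1")
    case True
    have "3*g3*\<alpha> = 0" using L(2) True g3 by (simp add: algebra_simps)
    thus ?thesis using True g3 by simp
  next
    case False
    define c0 where "c0 = \<alpha> / (1 - \<beta>)"
    have "\<alpha> + \<beta> * c0 = c0" using False unfolding c0_def by (simp add: field_simps)
    hence "(of_rat \<alpha> + of_rat \<beta> * of_rat c0 :: complex) = of_rat c0"
      by (metis of_rat_add of_rat_mult)
    hence "cub g0 g1 g2 g3 (of_rat c0) = of_rat (\<beta>^3) * cub g0 g1 g2 g3 (of_rat c0)"
      using idz[of "of_rat c0"] by simp
    hence "(1 - of_rat (\<beta>^3)) * cub g0 g1 g2 g3 (of_rat c0) = 0" by (simp add: algebra_simps)
    moreover have "(1 - of_rat (\<beta>^3) :: complex) \<noteq> 0"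
    proof
      assume "(1 - of_rat (\<beta>^3) :: complex) = 0"
      hence "\<beta>^3 = 1" by (metis eq_iff_diff_eq_0 of_rat_1 of_rat_eq_iff)
      thus False using b3 False by blast
    qed
    ultimately have "cub g0 g1 g2 g3 (of_rat c0) = 0" by simp
    hence q0: "qf l m (of_rat c0) = 0" using fac by simp
    have "of_rat 0 * (of_rat c0)^2 + of_rat 1 * (of_rat c0) + of_rat (-c0) = (0::complex)"
      by (simp add: of_rat_minus)
    hence "(1::rat) = 0" using Kq[OF lm q0] by blast
    thus ?thesis by simp
  qed
qed

lemma caseC:
  fixes l m :: int and t :: complex and \<alpha> \<beta> g0 g1 g2 g3 h0 h1 h2 h3 :: rat
  assumes lm: "l > 0" "m > 0" and g3: "g3 \<noteq> 0" and b0: "\<beta> \<noteq> 0"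
    and fac: "\<forall>z. qf l m z = cub g0 g1 g2 g3 z * cub h0 h1 h2 h3 z"
    and qt: "qf l m t = 0" and gt: "cub g0 g1 g2 g3 t = 0"
    and e1: "cub h0 h1 h2 h3 (of_rat \<alpha> + of_rat \<beta> * t) = 0"
    and e2: "cub h0 h1 h2 h3 (of_rat (-\<alpha>) + of_rat (-\<beta>) * t) = 0"
  shows False
proof -
  note L1 = Lcomp(1)[OF lm g3 qt gt e1]
  note L2 = Lcomp(1)[OF lm g3 qt gt e2]
  define z0 :: complex where "z0 = of_rat (-\<alpha>/\<beta>)"
  have z1: "of_rat \<alpha> + of_rat \<beta> * z0 = 0" using b0 unfolding z0_def
    by (simp add: of_rat_divide of_rat_minus field_simps)
  have z2: "of_rat (-\<alpha>) + of_rat (-\<beta>) * z0 = 0" using b0 unfolding z0_def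
    by (simp add: of_rat_divide of_rat_minus field_simps)
  have "cub h0 h1 h2 h3 0 = of_rat (h3*\<beta>^3/g3) * cub g0 g1 g2 g3 z0" using L1 z1 by metis
  moreover have "cub h0 h1 h2 h3 0 = of_rat (h3*(-\<beta>)^3/g3) * cub g0 g1 g2 g3 z0" using L2 z2 by metis
  ultimately have "cub h0 h1 h2 h3 0 = - cub h0 h1 h2 h3 0" by (simp add: of_rat_minus)
  hence "cub h0 h1 h2 h3 0 = 0" by simp
  hence "qf l m 0 = 0" using fac by simp
  thus False by (simp add: qf_def)
qed

lemma core:
  fixes l m :: int and t1 t2 :: complex and \<alpha> \<beta> g0 g1 g2 g3 h0 h1 h2 h3 :: rat
  assumes lm: "l > 0" "m > 0" and g3: "g3 \<noteq> 0" and b0: "\<beta> \<noteq> 0"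
    and fac: "\<forall>z. qf l m z = cub g0 g1 g2 g3 z * cub h0 h1 h2 h3 z"
    and q1: "qf l m t1 = 0" and gt: "cub g0 g1 g2 g3 t1 = 0"
    and t2: "t2 = of_rat \<alpha> + of_rat \<beta> * t1" and q2: "qf l m t2 = 0"
    and d1: "t2 \<noteq> t1" and d2: "t2 \<noteq> - t1"
  shows False
proof -
  have fac': "\<forall>z. qf l m z = cub g0 g1 g2 g3 z * (cub h0 h1 h2 h3 z)" using fac by blast
  have q2': "qf l m (-t2) = 0" using q2 by (simp add: qf_def)
  have t2': "-t2 = of_rat (-\<alpha>) + of_rat (-\<beta>) * t1" using t2 by (simp add: of_rat_minus)
  show False
  proof (cases "cub g0 g1 g2 g3 t2 = 0")
    case True
    hence "\<alpha> = 0 \<and> \<beta> = 1" using caseA[OF lm g3 fac' q1 gt] t2 by blast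
    thus False using t2 d1 by simp
  next
    case F1: False
    show False
    proof (cases "cub g0 g1 g2 g3 (-t2) = 0")
      case True
      hence "-\<alpha> = 0 \<and> -\<beta> = 1" using caseA[OF lm g3 fac' q1 gt] t2' by metis
      hence "\<alpha> = 0 \<and> \<beta> = -1" by simp
      thus False using t2 d2 by simp
    next
      case False
      have "cub h0 h1 h2 h3 t2 = 0" using F1 q2 fac by simp
      moreover have "cub h0 h1 h2 h3 (-t2) = 0" using False q2' fac by simp
      ultimately show False using caseC[OF lm g3 b0 fac q1 gt] t2 t2' by metis
    qed
  qed
qed

lemma mpm: "map_poly (of_rat::rat\<Rightarrow>'a::field_char_0) (p*q) = map_poly of_rat p * map_poly of_rat q"
  by (rule poly_eqI) (simp add: coeff_map_poly coeff_mult of_rat_sum of_rat_mult)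

lemma pe: "poly (map_poly (of_rat::rat\<Rightarrow>complex) p) z = (\<Sum>i\<le>degree p. of_rat (coeff p i) * z^i)"
  by (simp add: poly_altdef degree_map_poly coeff_map_poly)

lemma poly_cub:
  assumes "degree g \<le> 3"
  shows "poly (map_poly of_rat g) z = cub (coeff g 0) (coeff g 1) (coeff g 2) (coeff g 3) z"
proof -
  have "poly (map_poly of_rat g) z = (\<Sum>i\<le>degree g. of_rat (coeff g i) * z^i)" by (rule pe)
  also have "\<dots> = (\<Sum>i\<le>3. of_rat (coeff g i) * z^i)"
    by (rule sum.mono_neutral_left) (use assms in \<open>auto simp: coeff_eq_0\<close>)
  also have "\<dots> = cub (coeff g 0) (coeff g 1) (coeff g 2) (coeff g 3) z"
    by (simp add: cub_def numeral_3_eq_3 eval_nat_numeral algebra_simps)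
  finally show ?thesis .
qed

lemma qeval: "poly (map_poly of_rat (q_poly l m)) z = qf l m z"
  by (simp add: q_poly_def qf_def map_poly_pCons of_rat_add of_rat_diff of_rat_mult of_rat_minus algebra_simps eval_nat_numeral)

lemma deg3:
  fixes l m :: int and g :: "rat poly"
  assumes lm: "l > 0" "m > 0" and g0: "g \<noteq> 0" and dg: "degree g \<ge> 1"
    and rt: "\<And>z. poly (map_poly of_rat g) z = 0 \<Longrightarrow> qf l m z = 0"
  shows "degree g \<ge> 3"
proof (rule ccontr)
  assume "\<not> degree g \<ge> 3"
  hence d2: "degree g \<le> 2" by simp
  have dm: "degree (map_poly (of_rat::rat\<Rightarrow>complex) g) = degree g" by (simp add: degree_map_poly)
  have "\<not> (\<exists>a l. a \<noteq> 0 \<and> l = 0 \<and> map_poly (of_rat::rat\<Rightarrow>complex) g = pCons a l)"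
  proof
    assume "\<exists>a l. a \<noteq> 0 \<and> l = 0 \<and> map_poly (of_rat::rat\<Rightarrow>complex) g = pCons a l"
    then obtain a where "map_poly (of_rat::rat\<Rightarrow>complex) g = [:a:]" by blast
    hence "degree (map_poly (of_rat::rat\<Rightarrow>complex) g) = 0" by simp
    thus False using dm dg by simp
  qed
  then obtain z where z: "poly (map_poly (of_rat::rat\<Rightarrow>complex) g) z = 0"
    using fundamental_theorem_of_algebra_alt by blast
  have qz: "qf l m z = 0" using rt[OF z] .
  have c3: "coeff g 3 = 0" using d2 by (simp add: coeff_eq_0)
  have "cub (coeff g 0) (coeff g 1) (coeff g 2) (coeff g 3) z = 0" using z poly_cub[of g z] d2 by simp
  hence "of_rat (coeff g 2) * z^2 + of_rat (coeff g 1) * z + of_rat (coeff g 0) = 0"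
    using c3 by (simp add: cub_def algebra_simps)
  hence cs: "coeff g 2 = 0 \<and> coeff g 1 = 0 \<and> coeff g 0 = 0" using Kq[OF lm qz] by blast
  have "g = 0"
  proof (rule poly_eqI)
    fix i
    show "coeff g i = coeff 0 i"
    proof (cases "i \<le> 2")
      case True
      hence "i = 0 \<or> i = 1 \<or> i = 2" by auto
      thus ?thesis using cs by auto
    next
      case False thus ?thesis using d2 by (simp add: coeff_eq_0)
    qed
  qed
  thus False using g0 by simp
qed

lemma sqrt_root:
  fixes l m :: int and y :: real
  assumes "y \<ge> 0" and "y^3 - of_int(l+m+3)*y^2 + of_int(l*m+l+m+3)*y - 1 = 0"
  shows "qf l m (of_real (sqrt y)) = 0"
proof -
  have s2: "(sqrt y)^2 = y" using assms(1) by simp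
  have "qf l m (of_real (sqrt y)) = of_real (((sqrt y)^2)^3 - of_int(l+m+3)*((sqrt y)^2)^2 + of_int(l*m+l+m+3)*((sqrt y)^2) - 1)"
    unfolding qf_def by (simp flip: power_mult)
  also have "\<dots> = 0" unfolding s2 using assms(2) by simp
  finally show ?thesis .
qed

lemma three_roots:
  fixes l m :: int
  assumes lm: "l > 0" "m > 0"
  shows "\<exists>s1 s2 s3::real. 0 < s1 \<and> s1 < s2 \<and> s2 < s3 \<and> qf l m (of_real s1) = 0
     \<and> qf l m (of_real s2) = 0 \<and> qf l m (of_real s3) = 0"
proof -
  define A :: real where "A = of_int (l+m+3)"
  define B :: real where "B = of_int (l*m+l+m+3)"
  define P :: "real poly" where "P = [:-1, B, -A, 1:]"
  have Pe: "poly P y = y^3 - A*y^2 + B*y - 1" for y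
    unfolding P_def by (simp add: algebra_simps power2_eq_square power3_eq_cube)
  have rl: "0 < real_of_int l" "0 < real_of_int m" using lm by simp_all
  have P0: "poly P 0 < 0" by (simp add: Pe)
  have P1: "poly P 1 > 0" using rl by (simp add: Pe A_def B_def)
  have P2: "poly P (of_int l + 1) < 0"
  proof -
    have "poly P (of_int l + 1) = - ((real_of_int l)^2)" by (simp add: Pe A_def B_def algebra_simps power2_eq_square power3_eq_cube)
    thus ?thesis using rl by simp
  qed
  define N :: real where "N = of_int (l+m+4)"
  have P3: "poly P N > 0"
  proof -
    have "poly P N = N^2 + B*N - 1" by (simp add: Pe N_def A_def algebra_simps power2_eq_square power3_eq_cube)
    moreover have "N \<ge> 1" "B \<ge> 0" using lm by (simp_all add: N_def B_def)
    moreover have "N^2 \<ge> 4"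
    proof -
      have N2: "N \<ge> 2" using lm by (simp add: N_def)
      have "N * N \<ge> 2 * 2" using mult_mono[OF N2 N2] N2 by simp
      thus ?thesis by (simp add: power2_eq_square)
    qed
    moreover have "B*N \<ge> 0" using \<open>N \<ge> 1\<close> \<open>B \<ge> 0\<close> by simp
    ultimately show ?thesis by linarith
  qed
  obtain y1 where y1: "0 < y1" "y1 < 1" "poly P y1 = 0" using poly_IVT_pos[of 0 1 P] P0 P1 by auto
  obtain y2 where y2: "1 < y2" "y2 < of_int l + 1" "poly P y2 = 0" using poly_IVT_neg[of 1 "of_int l + 1" P] P1 P2 rl by auto
  obtain y3 where y3: "of_int l + 1 < y3" "y3 < N" "poly P y3 = 0" using poly_IVT_pos[of "of_int l + 1" N P] P2 P3 lm
    by (auto simp: N_def)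
  have r: "qf l m (of_real (sqrt y)) = 0" if "y > 0" "poly P y = 0" for y
    using sqrt_root[of y l m] that by (simp add: Pe A_def B_def)
  show ?thesis
    apply (rule exI[of _ "sqrt y1"], rule exI[of _ "sqrt y2"], rule exI[of _ "sqrt y3"])
    using y1 y2 y3 r by auto
qed

theorem lemma2p1:
  fixes l m :: int and \<theta>1 \<theta>2 \<theta>3 :: complex
  assumes "l > 0" and "m > 0"
    and roots: "{z. poly (map_poly of_rat (q_poly l m)) z = 0} = {\<theta>1, -\<theta>1, \<theta>2, -\<theta>2, \<theta>3, -\<theta>3}"
    and red: "\<not> irreducible (q_poly l m)"
  shows "\<forall>a b c :: rat. of_rat a + of_rat b * \<theta>1 + of_rat c * \<theta>2 = 0 \<longrightarrow> a = 0 \<and> b = 0 \<and> c = 0"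
proof -
  have lm: "l > 0" "m > 0" using assms(1,2) .
  have RS: "{z. qf l m z = 0} = {\<theta>1, -\<theta>1, \<theta>2, -\<theta>2, \<theta>3, -\<theta>3}"
    using roots by (simp add: qeval)
  have q1: "qf l m \<theta>1 = 0" using RS by blast
  have q2: "qf l m \<theta>2 = 0" using RS by blast
  have dist: "\<theta>2 \<noteq> \<theta>1 \<and> \<theta>2 \<noteq> - \<theta>1"
  proof (rule ccontr)
    assume "\<not> (\<theta>2 \<noteq> \<theta>1 \<and> \<theta>2 \<noteq> - \<theta>1)"
    hence "{\<theta>1, -\<theta>1, \<theta>2, -\<theta>2, \<theta>3, -\<theta>3} = set [\<theta>1, -\<theta>1, \<theta>3, -\<theta>3]" by auto
    hence c4: "card {z. qf l m z = 0} \<le> 4" using RS card_length[of "[\<theta>1, -\<theta>1, \<theta>3, -\<theta>3]"] by simp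
    have fin: "finite {z. qf l m z = 0}" using RS by simp
    obtain s1 s2 s3 :: real where s: "0 < s1" "s1 < s2" "s2 < s3" "qf l m (of_real s1) = 0"
      "qf l m (of_real s2) = 0" "qf l m (of_real s3) = 0" using three_roots[OF lm] by blast
    have sm: "qf l m (- of_real s) = qf l m (of_real s)" for s by (simp add: qf_def)
    define S6 where "S6 = {complex_of_real s1, - of_real s1, of_real s2, - of_real s2, of_real s3, - of_real s3}"
    have "S6 \<subseteq> {z. qf l m z = 0}" using s sm unfolding S6_def by auto
    hence "card S6 \<le> 4" using c4 fin card_mono by (meson le_trans)
    moreover have "card S6 = 6"
    proof -
      have ne: "complex_of_real a \<noteq> - of_real b" if "a > 0" "b > 0" for a b
      proof
        assume "complex_of_real a = - of_real b"
        hence "complex_of_real a = of_real (-b)" by simp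
        hence "a = -b" using of_real_eq_iff by blast
        thus False using that by simp
      qed
      have ne2: "- complex_of_real a \<noteq> - of_real b" if "a \<noteq> b" for a b using that by simp
      have ne3: "complex_of_real a \<noteq> of_real b" if "a \<noteq> b" for a b using that by simp
      have p: "s1 > 0" "s2 > 0" "s3 > 0" using s by auto
      show ?thesis unfolding S6_def
        using ne[OF p(1) p(1)] ne[OF p(1) p(2)] ne[OF p(1) p(3)] ne[OF p(2) p(1)] ne[OF p(2) p(2)]
          ne[OF p(2) p(3)] ne[OF p(3) p(1)] ne[OF p(3) p(2)] ne[OF p(3) p(3)] s(2,3)
        by (simp add: ne[OF p(1) p(1)] ne[OF p(1) p(2)] ne[OF p(1) p(3)] ne[OF p(2) p(1)] ne[OF p(2) p(2)]
          ne[OF p(2) p(3)] ne[OF p(3) p(1)] ne[OF p(3) p(2)] ne[OF p(3) p(3)] ne[OF p(1) p(1), symmetric]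
          ne[OF p(1) p(2), symmetric] ne[OF p(1) p(3), symmetric] ne[OF p(2) p(1), symmetric]
          ne[OF p(2) p(3), symmetric] ne[OF p(3) p(1), symmetric] ne[OF p(3) p(2), symmetric])
    qed
    ultimately show False by simp
  qed
  have q0: "q_poly l m \<noteq> 0" and qdeg: "degree (q_poly l m) = 6" by (simp_all add: q_poly_def)
  have "\<not> q_poly l m dvd 1" using qdeg is_unit_iff_degree[OF q0] by simp
  then obtain g h where gh: "q_poly l m = g * h" and gu: "\<not> g dvd 1" and hu: "\<not> h dvd 1"
    using red q0 unfolding irreducible_def by blast
  have g0: "g \<noteq> 0" and h0: "h \<noteq> 0" using gh q0 by auto
  have dg1: "degree g \<ge> 1" using gu is_unit_iff_degree[OF g0] by simp
  have dh1: "degree h \<ge> 1" using hu is_unit_iff_degree[OF h0] by simp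
  have prod: "qf l m z = poly (map_poly of_rat g) z * poly (map_poly of_rat h) z" for z
    using qeval[of l m z] gh by (simp add: mpm)
  have dg3: "degree g \<ge> 3" using deg3[OF lm g0 dg1] prod by simp
  have dh3: "degree h \<ge> 3" using deg3[OF lm h0 dh1] prod by simp
  have "degree g + degree h = 6" using degree_mult_eq[OF g0 h0] gh qdeg by simp
  hence dg: "degree g = 3" and dh: "degree h = 3" using dg3 dh3 by auto
  define gg0 where "gg0 = coeff g 0"
  define g1 where "g1 = coeff g 1"
  define g2 where "g2 = coeff g 2"
  define g3 where "g3 = coeff g 3"
  define hh0 where "hh0 = coeff h 0"
  define h1 where "h1 = coeff h 1"
  define h2 where "h2 = coeff h 2"
  define h3 where "h3 = coeff h 3"
  have g3: "g3 \<noteq> 0" using dg g0 unfolding gg0_def g1_def g2_def g3_def by (metis leading_coeff_0_iff)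
  have h3: "h3 \<noteq> 0" using dh h0 unfolding hh0_def h1_def h2_def h3_def by (metis leading_coeff_0_iff)
  have fac: "\<forall>z. qf l m z = cub gg0 g1 g2 g3 z * cub hh0 h1 h2 h3 z"
    using prod poly_cub[of g] poly_cub[of h] dg dh unfolding gg0_def g1_def g2_def g3_def hh0_def h1_def h2_def h3_def by simp
  have fac2: "\<forall>z. qf l m z = cub hh0 h1 h2 h3 z * cub gg0 g1 g2 g3 z"
    using fac by (simp add: mult.commute)
  show ?thesis
  proof (intro allI impI)
    fix a b c :: rat
    assume e: "of_rat a + of_rat b * \<theta>1 + of_rat c * \<theta>2 = 0"
    show "a = 0 \<and> b = 0 \<and> c = 0"
    proof (cases "c = 0")
      case True
      hence "of_rat 0 * \<theta>1^2 + of_rat b * \<theta>1 + of_rat a = 0" using e by (simp add: algebra_simps)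
      thus ?thesis using Kq[OF lm q1] True by blast
    next
      case False
      define \<alpha> where "\<alpha> = - a / c"
      define \<beta> where "\<beta> = - b / c"
      have "of_rat c * \<theta>2 = - of_rat a - of_rat b * \<theta>1" using e by (simp add: algebra_simps eq_neg_iff_add_eq_0)
      hence t2: "\<theta>2 = of_rat \<alpha> + of_rat \<beta> * \<theta>1" using False
        unfolding \<alpha>_def \<beta>_def by (simp add: of_rat_divide of_rat_minus field_simps)
      have b0: "\<beta> \<noteq> 0"
      proof
        assume "\<beta> = 0"
        hence "of_rat 0 * \<theta>2^2 + of_rat 1 * \<theta>2 + of_rat (-\<alpha>) = 0" using t2 by (simp add: of_rat_minus)
        hence "(1::rat) = 0" using Kq[OF lm q2] by blast
        thus False by simp
      qed
      have "cub gg0 g1 g2 g3 \<theta>1 = 0 \<or> cub hh0 h1 h2 h3 \<theta>1 = 0" using fac q1 by simp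
      thus ?thesis
      proof
        assume "cub gg0 g1 g2 g3 \<theta>1 = 0"
        from core[OF lm g3 b0 fac q1 this t2 q2] dist show ?thesis by simp
      next
        assume "cub hh0 h1 h2 h3 \<theta>1 = 0"
        from core[OF lm h3 b0 fac2 q1 this t2 q2] dist show ?thesis by simp
      qed
    qed
  qed
qed

end
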